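(* Let $q$ be a non-negative integer and $\Lambda$ a unital commutative ring which is $q$-torsion-free. If $\mathfrak g$ is a perfect Lie algebra over $\Lambda$, i.e. $\mathfrak g=[\mathfrak g,\mathfrak g]$, then $Z^{\boxtimes}_q(\mathfrak g)=Z^{\curlywedge}_q(\mathfrak g)=Z(\mathfrak g)$.
   Context: All Lie algebras are over $\Lambda$; $Z(\mathfrak g)$ is the center and $[\mathfrak g,\mathfrak g]$ the $\Lambda$-span of all brackets. Non-abelian $q$-tensor square: for $q\ge1$, $\mathfrak g\otimes^q\mathfrak g$ is the Lie algebra generated by symbols $h\otimes g$ and $\{h\}$ ($h,g\in\mathfrak g$) subject to, for all $h,h',g,g'\in\mathfrak g$, $\lambda,\lambda'\in\Lambda$: (1) $\lambda(h\otimes g)=\lambda h\otimes g=h\otimes\lambda g$; (2) $(h+h')\otimes g=h\otimes g+h'\otimes g$; (3) $h\otimes(g+g')=h\otimes g+h\otimes g'$; (4) $[h,h']\otimes g=h\otimes[h',g]-h'\otimes[h,g]$; (5) $h\otimes[g,g']=[g',h]\otimes g-[g,h]\otimes g'$; (6) $[h\otimes g,h'\otimes g']=[h,g]\otimes[h',g']$; (7) $[\{h'\},h\otimes g]=[qh',h]\otimes g+h\otimes[qh',g]$; (8) $\{\lambda h+\lambda'h'\}=\lambda\{h\}+\lambda'\{h'\}$; (9) $[\{h\},\{h'\}]=qh\otimes qh'$; (10) $\{[h,g]\}=q(h\otimes g)$. For $q=0$, generated by the $h\otimes g$ subject to (1)–(6) only. The $q$-exterior square $\mathfrak g\wedge^q\mathfrak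 g$ is the quotient of $\mathfrak g\otimes^q\mathfrak g$ by the relations $h\otimes h=0$, images written $h\wedge g$. $Z^{\boxtimes}_q(\mathfrak g)=\{g\in\mathfrak g\mid g\otimes x=0\text{ in }\mathfrak g\otimes^q\mathfrak g\text{ for all }x\in\mathfrak g\}$ and $Z^{\curlywedge}_q(\mathfrak g)=\{g\in\mathfrak g\mid g\wedge x=0\text{ in }\mathfrak g\wedge^q\mathfrak g\text{ for all }x\in\mathfrak g\}$. *)

theory Defs
  imports Main
begin

definition lie_alg :: "('r::comm_ring_1 \<Rightarrow> 'g::ab_group_add \<Rightarrow> 'g) \<Rightarrow> ('g \<Rightarrow> 'g \<Rightarrow> 'g) \<Rightarrow> bool" where
  "lie_alg smul br \<longleftrightarrow>
     (\<forall>a b x. smul (a + b) x = smul a x + smul b x) \<and>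
     (\<forall>a x y. smul a (x + y) = smul a x + smul a y) \<and>
     (\<forall>a b x. smul (a * b) x = smul a (smul b x)) \<and>
     (\<forall>x. smul 1 x = x) \<and>
     (\<forall>x y z. br (x + y) z = br x z + br y z) \<and>
     (\<forall>x y z. br x (y + z) = br x y + br x z) \<and>
     (\<forall>a x y. br (smul a x) y = smul a (br x y)) \<and>
     (\<forall>a x y. br x (smul a y) = smul a (br x y)) \<and>
     (\<forall>x. br x x = 0) \<and>
     (\<forall>x y z. br x (br y z) + br y (br z x) + br z (br x y) = 0)"

inductive_set lspan :: "('r \<Rightarrow> 'g::ab_group_add \<Rightarrow> 'g) \<Rightarrow> 'g set \<Rightarrow> 'g set"
  for smul :: "'r \<Rightarrow> 'g \<Rightarrow> 'g" and S :: "'g set" where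
  lspan_zero: "0 \<in> lspan smul S"
| lspan_base: "x \<in> S \<Longrightarrow> x \<in> lspan smul S"
| lspan_add: "x \<in> lspan smul S \<Longrightarrow> y \<in> lspan smul S \<Longrightarrow> x + y \<in> lspan smul S"
| lspan_smul: "x \<in> lspan smul S \<Longrightarrow> smul a x \<in> lspan smul S"

definition derived :: "('r \<Rightarrow> 'g::ab_group_add \<Rightarrow> 'g) \<Rightarrow> ('g \<Rightarrow> 'g \<Rightarrow> 'g) \<Rightarrow> 'g set" where
  "derived smul br = lspan smul {br a b | a b. True}"

definition perfect :: "('r \<Rightarrow> 'g::ab_group_add \<Rightarrow> 'g) \<Rightarrow> ('g \<Rightarrow> 'g \<Rightarrow> 'g) \<Rightarrow> bool" where
  "perfect smul br \<longleftrightarrow> derived smul br = UNIV"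

definition center :: "('g::zero \<Rightarrow> 'g \<Rightarrow> 'g) \<Rightarrow> 'g set" where
  "center br = {z. \<forall>x. br z x = 0}"

definition q_torsion_free :: "nat \<Rightarrow> 'r::comm_ring_1 itself \<Rightarrow> bool" where
  "q_torsion_free q _ \<longleftrightarrow> (q \<noteq> 0 \<longrightarrow> (\<forall>l::'r. of_nat q * l = 0 \<longrightarrow> l = 0))"

text \<open>Terms of the free (Lie) algebra signature over 'r on generators
  h \<otimes> g (LT h g) and {h} (LB h).\<close>
datatype ('r, 'g) lterm =
    LT 'g 'g
  | LB 'g
  | LZ
  | LAdd "('r, 'g) lterm" "('r, 'g) lterm"
  | LNeg "('r, 'g) lterm"
  | LSm 'r "('r, 'g) lterm"
  | LBr "('r, 'g) lterm" "('r, 'g) lterm"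

text \<open>The smallest congruence on terms containing the Lie algebra axioms over 'r and the
defining relations (1)-(10) of the non-abelian q-tensor square (for q = 0: relations
(1)-(6), the brace generators being absent, i.e. set to 0); if ext is True, additionally the
exterior relations h \<otimes> h = 0. Two terms are related iff they are equal in the presented
Lie algebra g \<otimes>^q g (resp. g \<wedge>^q g).\<close>
inductive qrel :: "('r::comm_ring_1 \<Rightarrow> 'g::ab_group_add \<Rightarrow> 'g) \<Rightarrow> ('g \<Rightarrow> 'g \<Rightarrow> 'g) \<Rightarrow> nat \<Rightarrow> bool
    \<Rightarrow> ('r, 'g) lterm \<Rightarrow> ('r, 'g) lterm \<Rightarrow> bool"
  for smul :: "'r \<Rightarrow> 'g \<Rightarrow> 'g" and br :: "'g \<Rightarrow> 'g \<Rightarrow> 'g" and q :: nat and ext :: bool where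
  refl: "qrel smul br q ext t t"
| sym: "qrel smul br q ext s t \<Longrightarrow> qrel smul br q ext t s"
| trans: "qrel smul br q ext s t \<Longrightarrow> qrel smul br q ext t u \<Longrightarrow> qrel smul br q ext s u"
| cong_add: "qrel smul br q ext s s' \<Longrightarrow> qrel smul br q ext t t' \<Longrightarrow> qrel smul br q ext (LAdd s t) (LAdd s' t')"
| cong_neg: "qrel smul br q ext s s' \<Longrightarrow> qrel smul br q ext (LNeg s) (LNeg s')"
| cong_sm: "qrel smul br q ext s s' \<Longrightarrow> qrel smul br q ext (LSm a s) (LSm a s')"
| cong_br: "qrel smul br q ext s s' \<Longrightarrow> qrel smul br q ext t t' \<Longrightarrow> qrel smul br q ext (LBr s t) (LBr s' t')"
| add_assoc: "qrel smul br q ext (LAdd (LAdd s t) u) (LAdd s (LAdd t u))"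
| add_comm: "qrel smul br q ext (LAdd s t) (LAdd t s)"
| add_zero: "qrel smul br q ext (LAdd s LZ) s"
| add_neg: "qrel smul br q ext (LAdd s (LNeg s)) LZ"
| sm_add_l: "qrel smul br q ext (LSm (a + b) s) (LAdd (LSm a s) (LSm b s))"
| sm_add_r: "qrel smul br q ext (LSm a (LAdd s t)) (LAdd (LSm a s) (LSm a t))"
| sm_mult: "qrel smul br q ext (LSm (a * b) s) (LSm a (LSm b s))"
| sm_one: "qrel smul br q ext (LSm 1 s) s"
| br_add_l: "qrel smul br q ext (LBr (LAdd s t) u) (LAdd (LBr s u) (LBr t u))"
| br_add_r: "qrel smul br q ext (LBr s (LAdd t u)) (LAdd (LBr s t) (LBr s u))"
| br_sm_l: "qrel smul br q ext (LBr (LSm a s) t) (LSm a (LBr s t))"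
| br_sm_r: "qrel smul br q ext (LBr s (LSm a t)) (LSm a (LBr s t))"
| br_alt: "qrel smul br q ext (LBr s s) LZ"
| br_jacobi: "qrel smul br q ext (LAdd (LAdd (LBr s (LBr t u)) (LBr t (LBr u s))) (LBr u (LBr s t))) LZ"
| r1a: "qrel smul br q ext (LSm l (LT h g)) (LT (smul l h) g)"
| r1b: "qrel smul br q ext (LSm l (LT h g)) (LT h (smul l g))"
| r2: "qrel smul br q ext (LT (h + h') g) (LAdd (LT h g) (LT h' g))"
| r3: "qrel smul br q ext (LT h (g + g')) (LAdd (LT h g) (LT h g'))"
| r4: "qrel smul br q ext (LT (br h h') g) (LAdd (LT h (br h' g)) (LNeg (LT h' (br h g))))"
| r5: "qrel smul br q ext (LT h (br g g')) (LAdd (LT (br g' h) g) (LNeg (LT (br g h) g')))"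
| r6: "qrel smul br q ext (LBr (LT h g) (LT h' g')) (LT (br h g) (br h' g'))"
| r7: "q \<noteq> 0 \<Longrightarrow> qrel smul br q ext (LBr (LB h') (LT h g))
        (LAdd (LT (br (smul (of_nat q) h') h) g) (LT h (br (smul (of_nat q) h') g)))"
| r8: "q \<noteq> 0 \<Longrightarrow> qrel smul br q ext (LB (smul l h + smul l' h')) (LAdd (LSm l (LB h)) (LSm l' (LB h')))"
| r9: "q \<noteq> 0 \<Longrightarrow> qrel smul br q ext (LBr (LB h) (LB h')) (LT (smul (of_nat q) h) (smul (of_nat q) h'))"
| r10: "q \<noteq> 0 \<Longrightarrow> qrel smul br q ext (LB (br h g)) (LSm (of_nat q) (LT h g))"
| no_braces: "q = 0 \<Longrightarrow> qrel smul br q ext (LB h) LZ"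
| ext_rel: "ext \<Longrightarrow> qrel smul br q ext (LT h h) LZ"

definition Z_tensor :: "('r::comm_ring_1 \<Rightarrow> 'g::ab_group_add \<Rightarrow> 'g) \<Rightarrow> ('g \<Rightarrow> 'g \<Rightarrow> 'g) \<Rightarrow> nat \<Rightarrow> 'g set" where
  "Z_tensor smul br q = {g. \<forall>x. qrel smul br q False (LT g x) LZ}"

definition Z_wedge :: "('r::comm_ring_1 \<Rightarrow> 'g::ab_group_add \<Rightarrow> 'g) \<Rightarrow> ('g \<Rightarrow> 'g \<Rightarrow> 'g) \<Rightarrow> nat \<Rightarrow> 'g set" where
  "Z_wedge smul br q = {g. \<forall>x. qrel smul br q True (LT g x) LZ}"

end

theory Submission
  imports Defs
begin

primrec ev :: "('r \<Rightarrow> 'g::ab_group_add \<Rightarrow> 'g) \<Rightarrow> ('g \<Rightarrow> 'g \<Rightarrow> 'g) \<Rightarrow> nat \<Rightarrow> ('r::comm_ring_1, 'g) lterm \<Rightarrow> 'g" where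
  "ev smul br q (LT h g) = br h g"
| "ev smul br q (LB h) = smul (of_nat q) h"
| "ev smul br q LZ = 0"
| "ev smul br q (LAdd s t) = ev smul br q s + ev smul br q t"
| "ev smul br q (LNeg s) = - ev smul br q s"
| "ev smul br q (LSm a s) = smul a (ev smul br q s)"
| "ev smul br q (LBr s t) = br (ev smul br q s) (ev smul br q t)"

lemma lie_facts:
  assumes L: "lie_alg smul br"
  shows "br x 0 = 0" "br 0 x = 0" "br y x = - br x y" "br x (- y) = - br x y"
    "smul (a::'r::comm_ring_1) (smul b (x::'g::ab_group_add)) = smul b (smul a x)" "smul 0 x = 0"
proof -
  have ad: "\<And>x y z. br x (y + z) = br x y + br x z" and adl: "\<And>x y z. br (x + y) z = br x z + br y z"
    and al: "\<And>x. br x x = 0" and sm: "\<And>a b x. smul (a * b) x = smul a (smul b x)"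
    and sml: "\<And>a b x. smul (a + b) x = smul a x + smul b x"
    using L unfolding lie_alg_def by auto
  show z1: "br x 0 = 0" using ad[of x 0 0] by simp
  have "br 0 x = br 0 x + br 0 x" using adl[of 0 0 x] by simp
  then show "br 0 x = 0" by simp
  have "br (x + y) (x + y) = br x x + br x y + (br y x + br y y)" by (simp add: ad adl)
  then show anti: "br y x = - br x y" using al by (simp add: add_eq_0_iff)
  have "br x (y + - y) = 0" using z1 by simp
  then show "br x (- y) = - br x y" by (simp only: ad) (simp add: add_eq_0_iff)
  show "smul a (smul b x) = smul b (smul a x)" by (metis sm mult.commute)
  have "smul 0 x = smul 0 x + smul 0 x" using sml[of 0 0 x] by simp
  then show "smul 0 x = 0" by simp
qed

lemma ev_sound:
  assumes L: "lie_alg smul br"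
  shows "qrel smul br q ext s t \<Longrightarrow> ev smul br q s = ev smul br q t"
proof (induction rule: qrel.induct)
  case (br_jacobi s t u)
  then show ?case using L unfolding lie_alg_def by simp
next
  case (r4 h h' g)
  have J: "br h (br h' g) + br h' (br g h) + br g (br h h') = 0" using L unfolding lie_alg_def by blast
  have "br h' (br g h) = - br h' (br h g)" using lie_facts[OF L] by metis
  moreover have "br g (br h h') = - br (br h h') g" using lie_facts[OF L] by metis
  ultimately show ?case using J by (simp add: algebra_simps add_eq_0_iff)
next
  case (r5 h g g')
  have J: "br h (br g g') + br g (br g' h) + br g' (br h g) = 0" using L unfolding lie_alg_def by blast
  have "br g (br g' h) = - br (br g' h) g" using lie_facts[OF L] by metis
  moreover have "br g' (br h g) = br (br g h) g'" using lie_facts[OF L] by (metis minus_minus)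
  ultimately show ?case using J by (simp add: algebra_simps add_eq_0_iff)
next
  case (r7 h' h g)
  define k where "k = smul (of_nat q) h'"
  have J: "br k (br h g) + br h (br g k) + br g (br k h) = 0" using L unfolding lie_alg_def by blast
  have "br h (br g k) = - br h (br k g)" using lie_facts[OF L] by metis
  moreover have "br g (br k h) = - br (br k h) g" using lie_facts[OF L] by metis
  ultimately show ?case using J by (simp add: algebra_simps add_eq_0_iff k_def[symmetric])
next
  case (r8 l h l' h')
  have D: "smul (of_nat q) (smul l h + smul l' h') = smul (of_nat q) (smul l h) + smul (of_nat q) (smul l' h')"
    using L unfolding lie_alg_def by metis
  have "smul (of_nat q) (smul l h) = smul l (smul (of_nat q) h)"
    "smul (of_nat q) (smul l' h') = smul l' (smul (of_nat q) h')"
    using lie_facts(5)[OF L] by blast+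
  then show ?case using D by simp
next
  case (no_braces h)
  then show ?case using lie_facts(6)[OF L] by simp
qed (insert L, simp_all add: lie_alg_def)

lemma rel_ext:
  "qrel smul br q False s t \<Longrightarrow> qrel smul br q True s t"
  by (induction rule: qrel.induct) (auto intro: qrel.intros)

lemma cancel:
  assumes "qrel smul br q e t (LAdd t t)"
  shows "qrel smul br q e t LZ"
proof -
  let ?R = "qrel smul br q e"
  have "?R LZ (LAdd t (LNeg t))" by (rule qrel.sym, rule qrel.add_neg)
  moreover have "?R (LAdd t (LNeg t)) (LAdd (LAdd t t) (LNeg t))"
    by (rule qrel.cong_add[OF assms qrel.refl])
  moreover have "?R (LAdd (LAdd t t) (LNeg t)) (LAdd t (LAdd t (LNeg t)))" by (rule qrel.add_assoc)
  moreover have "?R (LAdd t (LAdd t (LNeg t))) (LAdd t LZ)" by (rule qrel.cong_add[OF qrel.refl qrel.add_neg])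
  moreover have "?R (LAdd t LZ) t" by (rule qrel.add_zero)
  ultimately have "?R LZ t" by (meson qrel.trans)
  then show ?thesis by (rule qrel.sym)
qed

lemma zero_left: "qrel smul br q e (LT (0::'g::ab_group_add) x) LZ"
  by (rule cancel) (metis add_0 qrel.r2)

lemma zero_right: "qrel smul br q e (LT x (0::'g::ab_group_add)) LZ"
  by (rule cancel) (metis add_0 qrel.r3)

lemma sm_LZ: "qrel smul br q e (LSm a LZ) LZ"
proof (rule cancel)
  have "qrel smul br q e (LSm a LZ) (LSm a (LAdd LZ LZ))"
    by (rule qrel.cong_sm, rule qrel.sym, rule qrel.add_zero)
  then show "qrel smul br q e (LSm a LZ) (LAdd (LSm a LZ) (LSm a LZ))"
    using qrel.sm_add_r qrel.trans by metis
qed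

lemma center_tensor:
  assumes L: "lie_alg smul br" and z: "\<forall>x. br z x = 0"
    and x: "x \<in> lspan smul {br a b | a b. True}"
  shows "qrel smul br q e (LT z x) LZ"
  using x
proof (induction rule: lspan.induct)
  case lspan_zero
  then show ?case by (rule zero_right)
next
  case (lspan_base y)
  then obtain a b where y: "y = br a b" by blast
  have "br b z = 0" "br a z = 0" using z lie_facts(3)[OF L] by (metis neg_equal_0_iff_equal)+
  then have "qrel smul br q e (LT z y) (LAdd (LT 0 a) (LNeg (LT 0 b)))"
    using y qrel.r5 by metis
  moreover have "qrel smul br q e (LAdd (LT 0 a) (LNeg (LT 0 b))) (LAdd LZ (LNeg LZ))"
    by (intro qrel.cong_add qrel.cong_neg zero_left)
  moreover have "qrel smul br q e (LAdd LZ (LNeg LZ)) LZ" by (rule qrel.add_neg)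
  ultimately show ?case by (meson qrel.trans)
next
  case (lspan_add x y)
  have "qrel smul br q e (LT z (x + y)) (LAdd (LT z x) (LT z y))" by (rule qrel.r3)
  moreover have "qrel smul br q e (LAdd (LT z x) (LT z y)) (LAdd LZ LZ)"
    by (intro qrel.cong_add lspan_add.IH)
  moreover have "qrel smul br q e (LAdd LZ LZ) LZ" by (rule qrel.add_zero)
  ultimately show ?case by (meson qrel.trans)
next
  case (lspan_smul x a)
  have "qrel smul br q e (LT z (smul a x)) (LSm a (LT z x))" by (rule qrel.sym, rule qrel.r1b)
  moreover have "qrel smul br q e (LSm a (LT z x)) (LSm a LZ)"
    by (intro qrel.cong_sm lspan_smul.IH)
  ultimately show ?case using sm_LZ qrel.trans by metis
qed

theorem proposition6p9:
  fixes smul :: "'r::comm_ring_1 \<Rightarrow> 'g::ab_group_add \<Rightarrow> 'g"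
    and br :: "'g \<Rightarrow> 'g \<Rightarrow> 'g"
    and q :: nat
  assumes "lie_alg smul br"
    and "q_torsion_free q TYPE('r)"
    and "perfect smul br"
  shows "Z_tensor smul br q = Z_wedge smul br q \<and> Z_wedge smul br q = center br"
proof -
  have A: "Z_tensor smul br q \<subseteq> Z_wedge smul br q"
    unfolding Z_tensor_def Z_wedge_def using rel_ext by blast
  have B: "Z_wedge smul br q \<subseteq> center br"
    unfolding Z_wedge_def center_def using ev_sound[OF assms(1)] by fastforce
  have C: "center br \<subseteq> Z_tensor smul br q"
  proof
    fix z assume "z \<in> center br"
    then have "\<forall>x. br z x = 0" by (simp add: center_def)
    moreover have "\<And>x. x \<in> lspan smul {br a b | a b. True}"
      using assms(3) unfolding perfect_def derived_def by blast
    ultimately show "z \<in> Z_tensor smul br q"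
      unfolding Z_tensor_def using center_tensor[OF assms(1)] by blast
  qed
  show ?thesis using A B C by blast
qed

end
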